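(* Let $f(z)=z+a_2z^2+a_3z^3+\cdots$ belong to the class $\mathcal{S}_G^{\ast}$. Then the following sharp estimates hold: $$|a_3-\mu a_2^2|\le \frac14\max\left\{1,\left|\mu-\frac13\right|\right\}\quad(\mu\in\mathbb{C}),$$ $$|a_2a_3-a_4|\le\frac16,\qquad |a_2a_4-a_3^2|\le\frac1{16}.$$
   Context: Let $\mathcal{U}=\{z\in\mathbb{C}:|z|<1\}$. Let $\mathcal{S}$ denote the class of functions $f$ analytic and univalent in $\mathcal{U}$ normalized by $f(0)=0$, $f'(0)=1$, i.e. $f(z)=z+\sum_{n\ge2}a_nz^n$. For analytic $g,h$ on $\mathcal{U}$, $g\prec h$ means there is an analytic $w$ on $\mathcal{U}$ with $w(0)=0$, $|w(z)|<1$, and $g(z)=h(w(z))$ for $z\in\mathcal{U}$. Let $\Psi(z)=\frac{z}{\ln(1+z)}$ on $\mathcal{U}$ (principal branch, $\Psi(0)=1$), the generating function of the Gregory coefficients. Define $\mathcal{S}_G^{\ast}=\{f\in\mathcal{S}: zf'(z)/f(z)\prec\Psi(z)\}$. "Sharp" means the bound is attained by some function in $\mathcal{S}_G^{\ast}$. *)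

theory Defs
  imports "HOL-Complex_Analysis.Complex_Analysis"
begin

definition unit_disc :: "complex set" where
  "unit_disc = ball 0 1"

definition classS :: "(complex \<Rightarrow> complex) \<Rightarrow> bool" where
  "classS f \<longleftrightarrow> f holomorphic_on unit_disc \<and> inj_on f unit_disc \<and>
     f 0 = 0 \<and> deriv f 0 = 1"

definition taylor_coeff :: "(complex \<Rightarrow> complex) \<Rightarrow> nat \<Rightarrow> complex" where
  "taylor_coeff f n = (deriv ^^ n) f 0 / of_nat (fact n)"

definition subordinate :: "(complex \<Rightarrow> complex) \<Rightarrow> (complex \<Rightarrow> complex) \<Rightarrow> bool" where
  "subordinate g h \<longleftrightarrow> (\<exists>w. w holomorphic_on unit_disc \<and> w 0 = 0 \<and>
      (\<forall>z\<in>unit_disc. norm (w z) < 1) \<and> (\<forall>z\<in>unit_disc. g z = h (w z)))"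

text \<open>Generating function of Gregory coefficients, z / Log(1+z), extended by 1 at 0.\<close>
definition Psi :: "complex \<Rightarrow> complex" where
  "Psi z = (if z = 0 then 1 else z / Ln (1 + z))"

definition starlike_quot :: "(complex \<Rightarrow> complex) \<Rightarrow> complex \<Rightarrow> complex" where
  "starlike_quot f z = (if z = 0 then 1 else z * deriv f z / f z)"

definition SG_star :: "(complex \<Rightarrow> complex) \<Rightarrow> bool" where
  "SG_star f \<longleftrightarrow> classS f \<and> subordinate (starlike_quot f) Psi"

end

theory Submission
  imports Defs
begin

lemma fps_exp_unique:
  fixes f g :: "complex \<Rightarrow> complex"
  assumes "f has_fps_expansion F" "g has_fps_expansion G"
    "eventually (\<lambda>z. f z = g z) (nhds 0)"
  shows "F = G"
proof (rule fps_ext)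
  fix n
  have "(deriv ^^ n) f 0 = (deriv ^^ n) g 0"
    by (rule higher_deriv_cong_ev[OF assms(3) refl])
  then show "fps_nth F n = fps_nth G n"
    using fps_nth_fps_expansion[OF assms(1)] fps_nth_fps_expansion[OF assms(2)] by simp
qed

lemma fps_exp_at0:
  fixes f :: "complex \<Rightarrow> complex"
  assumes "f has_fps_expansion F" shows "f 0 = fps_nth F 0"
  using fps_nth_fps_expansion[OF assms, of 0] by simp

lemma fps_exp_compose_ex:
  fixes f w :: "complex \<Rightarrow> complex"
  assumes "f has_fps_expansion F" "w has_fps_expansion W" "w 0 = 0"
  shows "\<exists>C. (\<lambda>z. f (w z)) has_fps_expansion C"
proof -
  obtain s where s: "open s" "0 \<in> s" "f holomorphic_on s"
    using has_fps_expansion_imp_holomorphic[OF assms(1)] by metis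
  obtain t where t: "open t" "0 \<in> t" "w holomorphic_on t"
    using has_fps_expansion_imp_holomorphic[OF assms(2)] by metis
  have ct: "continuous_on t w" using t holomorphic_on_imp_continuous_on by blast
  define u where "u = t \<inter> w -` s"
  have ou: "open u" unfolding u_def using continuous_open_preimage[OF ct t(1) s(1)] .
  have u0: "0 \<in> u" unfolding u_def using t s assms(3) by auto
  have "(\<lambda>z. f (w z)) holomorphic_on u"
  proof -
    have "(f \<circ> w) holomorphic_on u"
      by (rule holomorphic_on_compose_gen[where t=s]) (use t s in \<open>auto simp: u_def intro: holomorphic_on_subset\<close>)
    thus ?thesis by (simp add: o_def)
  qed
  thus ?thesis using has_fps_expansion_fps_expansion[OF ou u0] by blast
qed

lemma fps_power_nth_small:
  fixes W :: "'a::comm_ring_1 fps"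
  assumes "fps_nth W 0 = 0" shows "i < N \<Longrightarrow> fps_nth (W ^ N) i = 0"
proof (induction N arbitrary: i)
  case 0 thus ?case by simp
next
  case (Suc N)
  have "fps_nth (W ^ Suc N) i = (\<Sum>j=0..i. fps_nth W j * fps_nth (W ^ N) (i - j))"
    by (simp add: fps_mult_nth)
  also have "\<dots> = 0"
  proof (rule sum.neutral, safe)
    fix j assume j: "j \<in> {0..i}"
    show "fps_nth W j * fps_nth (W ^ N) (i - j) = 0"
    proof (cases "j = 0")
      case True thus ?thesis using assms by simp
    next
      case False thus ?thesis using Suc j by simp
    qed
  qed
  finally show ?case .
qed

lemma fps_exp_compose:
  fixes f w :: "complex \<Rightarrow> complex"
  assumes fF: "f has_fps_expansion F" and wW: "w has_fps_expansion W" and w0: "w 0 = 0"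
  shows "(\<lambda>z. f (w z)) has_fps_expansion (F oo W)"
proof -
  obtain C where C: "(\<lambda>z. f (w z)) has_fps_expansion C"
    using fps_exp_compose_ex[OF fF wW w0] by blast
  have W0: "fps_nth W 0 = 0" using fps_exp_at0[OF wW] w0 by simp
  have "C = F oo W"
  proof (rule fps_ext)
    fix n
    define N where "N = Suc n"
    define T where "T = (\<Sum>k<N. fps_const (fps_nth F k) * fps_X ^ k)"
    define pf where "pf = (\<lambda>z::complex. \<Sum>k<N. fps_nth F k * z ^ k)"
    have pfT: "pf has_fps_expansion T"
      unfolding pf_def T_def
      by (intro has_fps_expansion_sum has_fps_expansion_mult has_fps_expansion_fps_X_power has_fps_expansion_const)
    have Tn: "fps_nth T i = (if i < N then fps_nth F i else 0)" for i
      unfolding T_def by (simp add: fps_sum_nth fps_X_power_nth if_distrib[of "\<lambda>x. _ * x"] sum.delta cong: if_cong)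
    obtain R where R: "(\<lambda>z. pf z + z ^ N * R z) has_fps_expansion F"
        "R has_fps_expansion fps_shift N (F - T)"
    proof (cases "F - T = 0")
      case True
      hence "F = T" by simp
      thus ?thesis using pfT by (intro that[of "\<lambda>_. 0"]) (auto simp: True)
    next
      case False
      have sd: "N \<le> subdegree (F - T)"
        by (rule subdegree_geI[OF False]) (simp add: Tn)
      have e1: "(\<lambda>z. f z - pf z) has_fps_expansion (F - T)"
        by (intro has_fps_expansion_diff fF pfT)
      define R where "R = (\<lambda>x. if x = 0 then fps_nth (F - T) N else (f x - pf x) / x ^ N)"
      have eR: "R has_fps_expansion fps_shift N (F - T)"
        unfolding R_def by (rule has_fps_expansion_shift[OF e1 sd refl])
      have f0: "f 0 = fps_nth F 0" using fps_exp_at0[OF fF] .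
      have pf0: "pf 0 = fps_nth F 0" unfolding pf_def N_def
        by (simp add: lessThan_Suc_eq_insert_0 zero_power)
      have "(\<lambda>z. pf z + z ^ N * R z) = f"
        by (rule ext) (auto simp: R_def N_def f0 pf0)
      thus ?thesis using fF eR by (intro that[of R]) auto
    qed
    obtain S where S: "(\<lambda>z. R (w z)) has_fps_expansion S"
      using fps_exp_compose_ex[OF R(2) wW w0] by blast
    have ev: "eventually (\<lambda>z. f z = pf z + z ^ N * R z) (nhds 0)"
    proof -
      have "(\<lambda>z. f z) has_fps_expansion F" using fF by simp
      from R(1) this show ?thesis
        unfolding has_fps_expansion_def by (auto elim: eventually_elim2)
    qed
    have contw: "isCont w 0"
      using has_fps_expansion_imp_continuous[OF wW, of UNIV] by simp
    have lim: "filterlim w (nhds 0) (nhds 0)"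
    proof -
      have "(w \<longlongrightarrow> w 0) (at 0)" using contw by (simp add: isCont_def)
      thus ?thesis using w0 by (auto simp: filterlim_def le_nhds tendsto_def eventually_nhds_conv_at eventually_filtermap)
    qed
    have ev2: "eventually (\<lambda>z. f (w z) = pf (w z) + (w z) ^ N * R (w z)) (nhds 0)"
      using eventually_compose_filterlim[OF ev lim] .
    have e2: "(\<lambda>z. pf (w z) + (w z) ^ N * R (w z)) has_fps_expansion
               (\<Sum>k<N. fps_const (fps_nth F k) * W ^ k) + W ^ N * S"
      unfolding pf_def
      by (intro has_fps_expansion_add has_fps_expansion_sum has_fps_expansion_mult
            has_fps_expansion_power wW S has_fps_expansion_const)
    have CC: "C = (\<Sum>k<N. fps_const (fps_nth F k) * W ^ k) + W ^ N * S"
      by (rule fps_exp_unique[OF C e2 ev2])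
    have z: "fps_nth (W ^ N * S) n = 0"
    proof -
      have "fps_nth (W ^ N * S) n = (\<Sum>j=0..n. fps_nth (W ^ N) j * fps_nth S (n - j))"
        by (simp add: fps_mult_nth)
      also have "\<dots> = 0"
        using fps_power_nth_small[OF W0, of _ N] unfolding N_def[symmetric] by (intro sum.neutral) (auto simp: N_def)
      finally show ?thesis .
    qed
    have "fps_nth C n = (\<Sum>k<N. fps_nth F k * fps_nth (W ^ k) n)"
      unfolding CC using z by (simp add: fps_sum_nth)
    also have "\<dots> = fps_nth (F oo W) n"
      by (simp add: fps_compose_nth N_def atLeast0AtMost lessThan_Suc_atMost)
    finally show "fps_nth C n = fps_nth (F oo W) n" .
  qed
  thus ?thesis using C by simp
qed

definition LF :: "complex fps" where "LF = Abs_fps (\<lambda>n. - ((-1) ^ n) / of_nat n)"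

lemma LF_exp: "(\<lambda>z. Ln (1 + z)) has_fps_expansion LF"
proof (rule has_fps_expansionI)
  have "eventually (\<lambda>u::complex. u \<in> ball 0 1) (nhds 0)"
    by (rule eventually_nhds_in_open) auto
  thus "eventually (\<lambda>u. (\<lambda>n. fps_nth LF n * u ^ n) sums Ln (1 + u)) (nhds 0)"
  proof eventually_elim
    case (elim u)
    hence "(\<lambda>n. - ((-u) ^ n) / of_nat n) sums Ln (1 + u)" by (intro Ln_series') auto
    moreover have "(\<lambda>n. - ((-u) ^ n) / of_nat n) = (\<lambda>n. fps_nth LF n * u ^ n)"
      by (rule ext) (simp add: LF_def power_minus')
    ultimately show ?case by simp
  qed
qed

definition PsiF :: "complex fps" where "PsiF = fps_X / LF"

lemma LF_nth: "fps_nth LF 0 = 0" "fps_nth LF 1 = 1" "fps_nth LF 2 = -1/2" "fps_nth LF 3 = 1/3"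
  "fps_nth LF 4 = -1/4"
  by (simp_all add: LF_def)

lemma LF_nz: "LF \<noteq> 0" using LF_nth(2) by auto
lemma LF_subdeg: "subdegree LF = 1"
  by (rule subdegreeI) (use LF_nth in auto)

lemma Psi_exp: "Psi has_fps_expansion PsiF"
proof -
  have "(\<lambda>x. if x = 0 then 1 else x / Ln (1 + x)) has_fps_expansion (fps_X / LF)"
    by (rule has_fps_expansion_divide[OF has_fps_expansion_fps_X LF_exp])
       (use LF_nz LF_subdeg LF_nth in auto)
  moreover have "(\<lambda>x. if x = 0 then 1 else x / Ln (1 + x)) = Psi"
    by (rule ext) (simp add: Psi_def)
  ultimately show ?thesis by (simp add: PsiF_def)
qed

lemma PsiF_LF: "PsiF * LF = fps_X"
  unfolding PsiF_def by (rule fps_times_divide_eq[OF LF_nz]) (simp add: LF_subdeg)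

lemma PsiF_nth: "fps_nth PsiF 0 = 1" "fps_nth PsiF 1 = 1/2" "fps_nth PsiF 2 = -1/12"
  "fps_nth PsiF 3 = 1/24"
proof -
  have e: "fps_nth (PsiF * LF) n = fps_nth fps_X n" for n using PsiF_LF by simp
  note e1 = e[of 1, unfolded fps_mult_nth] and e2 = e[of 2, unfolded fps_mult_nth]
   and e3 = e[of 3, unfolded fps_mult_nth] and e4 = e[of 4, unfolded fps_mult_nth]
  have s: "{0..1::nat} = {0,1}" "{0..2::nat} = {0,1,2}" "{0..3::nat} = {0,1,2,3}" "{0..4::nat} = {0,1,2,3,4}"
    by auto
  from e1 have a: "fps_nth PsiF 0 = 1" by (simp add: s LF_def)
  from e2 a have b: "fps_nth PsiF 1 = 1/2" by (simp add: s LF_def)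
  have b': "fps_nth PsiF (Suc 0) = 1/2" using b by simp
  from e3 a b' have c: "fps_nth PsiF 2 = -1/12" by (simp add: s LF_def) (simp add: field_simps add_eq_0_iff)
  from e4 a b' c have d: "fps_nth PsiF 3 = 1/24" by (simp add: s LF_def)
  show "fps_nth PsiF 0 = 1" "fps_nth PsiF 1 = 1/2" "fps_nth PsiF 2 = -1/12"
    "fps_nth PsiF 3 = 1/24" using a b c d by auto
qed

lemma pow_coeffs:
  fixes W :: "complex fps"
  assumes W0: "fps_nth W 0 = 0"
  shows "fps_nth (W ^ 0) 1 = 0" "fps_nth (W ^ 0) 2 = 0" "fps_nth (W ^ 0) 3 = 0"
    "fps_nth (W ^ 2) 1 = 0" "fps_nth (W ^ 2) 2 = (fps_nth W 1)^2"
    "fps_nth (W ^ 2) 3 = 2 * fps_nth W 1 * fps_nth W 2"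
    "fps_nth (W ^ 3) 1 = 0" "fps_nth (W ^ 3) 2 = 0" "fps_nth (W ^ 3) 3 = (fps_nth W 1)^3"
proof -
  have s: "{0..1::nat} = {0,1}" "{0..2::nat} = {0,1,2}" "{0..3::nat} = {0,1,2,3}"
    by auto
  have w2: "fps_nth (W ^ 2) n = (\<Sum>i=0..n. fps_nth W i * fps_nth W (n - i))" for n
    by (simp add: power2_eq_square fps_mult_nth)
  have w3: "fps_nth (W ^ 3) n = (\<Sum>i=0..n. fps_nth W i * fps_nth (W^2) (n - i))" for n
  proof -
    have "W ^ 3 = W * W ^ 2" by (simp add: power3_eq_cube power2_eq_square)
    thus ?thesis by (simp only: fps_mult_nth)
  qed
  show "fps_nth (W ^ 0) 1 = 0" "fps_nth (W ^ 0) 2 = 0" "fps_nth (W ^ 0) 3 = 0" by simp_all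
  show a: "fps_nth (W ^ 2) 1 = 0" by (simp add: w2 s W0)
  show b: "fps_nth (W ^ 2) 2 = (fps_nth W 1)^2" by (simp add: w2 s W0) (simp add: power2_eq_square)
  show "fps_nth (W ^ 2) 3 = 2 * fps_nth W 1 * fps_nth W 2" by (simp add: w2 s W0 algebra_simps)
  show "fps_nth (W ^ 3) 1 = 0" by (simp add: w3 s W0)
  have a': "fps_nth (W ^ 2) (Suc 0) = 0" using a by simp
  show "fps_nth (W ^ 3) 2 = 0" by (simp add: w3 s W0 a')
  have b': "fps_nth (W ^ 2) (Suc (Suc 0)) = (fps_nth W 1)^2" using b by (simp add: numeral_2_eq_2)
  show "fps_nth (W ^ 3) 3 = (fps_nth W 1)^3" by (simp add: w3 s W0 a' b b') (simp add: power3_eq_cube power2_eq_square W0)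
qed

lemma comp_coeffs:
  fixes W :: "complex fps"
  assumes W0: "fps_nth W 0 = 0"
  shows "fps_nth (PsiF oo W) 0 = 1"
    "fps_nth (PsiF oo W) 1 = fps_nth W 1 / 2"
    "fps_nth (PsiF oo W) 2 = fps_nth W 2 / 2 - (fps_nth W 1)^2 / 12"
    "fps_nth (PsiF oo W) 3 = fps_nth W 3 / 2 - fps_nth W 1 * fps_nth W 2 / 6 + (fps_nth W 1)^3 / 24"
proof -
  have s: "{0..1::nat} = {0,1}" "{0..2::nat} = {0,1,2}" "{0..3::nat} = {0,1,2,3}"
    by auto
  note pc = pow_coeffs[OF W0]
  have p1: "fps_nth PsiF (Suc 0) = 1/2" using PsiF_nth by simp
  show "fps_nth (PsiF oo W) 0 = 1" by (simp add: PsiF_nth)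
  show "fps_nth (PsiF oo W) 1 = fps_nth W 1 / 2"
    unfolding fps_compose_nth s using pc by (simp add: PsiF_nth p1)
  show "fps_nth (PsiF oo W) 2 = fps_nth W 2 / 2 - (fps_nth W 1)^2 / 12"
    unfolding fps_compose_nth s using pc by (simp add: PsiF_nth p1)
  show "fps_nth (PsiF oo W) 3 = fps_nth W 3 / 2 - fps_nth W 1 * fps_nth W 2 / 6 + (fps_nth W 1)^3 / 24"
    unfolding fps_compose_nth s using pc by (simp add: PsiF_nth p1)
qed

lemma taylor_coeff_eq:
  assumes "f has_fps_expansion F" shows "taylor_coeff f n = fps_nth F n"
  using fps_nth_fps_expansion[OF assms, of n] by (simp add: taylor_coeff_def)

lemma disc_facts: "open unit_disc" "(0::complex) \<in> unit_disc"
  by (auto simp: unit_disc_def)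

lemma coeffs:
  assumes fS: "classS f" and wh: "w holomorphic_on unit_disc" and w0: "w 0 = 0"
    and sq: "\<forall>z\<in>unit_disc. starlike_quot f z = Psi (w z)"
  defines "W \<equiv> fps_expansion w 0"
  shows "taylor_coeff f 2 = fps_nth W 1 / 2"
    "taylor_coeff f 3 = fps_nth W 2 / 4 + (fps_nth W 1)^2 / 12"
    "taylor_coeff f 4 = fps_nth W 3 / 6 + 5/72 * fps_nth W 1 * fps_nth W 2 + (fps_nth W 1)^3 / 72"
proof -
  define F where "F = fps_expansion f 0"
  have fh: "f holomorphic_on unit_disc" and finj: "inj_on f unit_disc" and f0: "f 0 = 0"
    and f1: "deriv f 0 = 1" using fS by (auto simp: classS_def)
  have fF: "f has_fps_expansion F" unfolding F_def using disc_facts fh by blast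
  have wW: "w has_fps_expansion W" unfolding W_def using disc_facts wh by blast
  have W0: "fps_nth W 0 = 0" using fps_exp_at0[OF wW] w0 by simp
  have F0: "fps_nth F 0 = 0" using fps_exp_at0[OF fF] f0 by simp
  have F1: "fps_nth F 1 = 1" using fps_nth_fps_expansion[OF fF, of 1] f1 by simp
  have e1: "(\<lambda>z. z * deriv f z) has_fps_expansion fps_X * fps_deriv F"
    by (intro has_fps_expansion_mult has_fps_expansion_deriv fF has_fps_expansion_fps_X)
  have e2: "(\<lambda>z. f z * Psi (w z)) has_fps_expansion F * (PsiF oo W)"
    by (intro has_fps_expansion_mult fF fps_exp_compose[OF Psi_exp wW w0])
  have ev: "eventually (\<lambda>z. z * deriv f z = f z * Psi (w z)) (nhds 0)"
  proof -
    have "eventually (\<lambda>z. z \<in> unit_disc) (nhds 0)"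
      by (rule eventually_nhds_in_open) (use disc_facts in auto)
    thus ?thesis
    proof eventually_elim
      case (elim z)
      show ?case
      proof (cases "z = 0")
        case True thus ?thesis using f0 by simp
      next
        case False
        have "f z \<noteq> 0"
          using finj elim disc_facts f0 False by (metis inj_onD)
        moreover have "z * deriv f z / f z = Psi (w z)"
          using sq elim False by (metis starlike_quot_def)
        ultimately show ?thesis by (simp add: field_simps)
      qed
    qed
  qed
  have E: "fps_X * fps_deriv F = F * (PsiF oo W)"
    by (rule fps_exp_unique[OF e1 e2 ev])
  define P where "P = PsiF oo W"
  note pc = comp_coeffs[OF W0, folded P_def]
  have s: "{0..2::nat} = {0,1,2}" "{0..3::nat} = {0,1,2,3}" "{0..4::nat} = {0,1,2,3,4}"
    by auto
  have E2: "fps_nth (fps_X * fps_deriv F) n = (\<Sum>i=0..n. fps_nth F i * fps_nth P (n - i))" for n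
    using E by (simp add: P_def fps_mult_nth)
  have F1': "fps_nth F (Suc 0) = 1" using F1 by simp
  have P0: "fps_nth P 0 = 1" using pc by simp
  have P1: "fps_nth P (Suc 0) = fps_nth W 1 / 2" using pc by simp
  have a2: "fps_nth F 2 = fps_nth W 1 / 2"
    using E2[of 2] by (simp add: s F0 F1' P0 P1 numeral_2_eq_2[symmetric])
  have a3: "fps_nth F 3 = fps_nth W 2 / 4 + (fps_nth W 1)^2 / 12"
    using E2[of 3] by (simp add: s F0 F1' P0 P1 a2 pc numeral_2_eq_2[symmetric]) (simp add: field_simps power2_eq_square)
  have a4: "fps_nth F 4 = fps_nth W 3 / 6 + 5/72 * fps_nth W 1 * fps_nth W 2 + (fps_nth W 1)^3 / 72"
    using E2[of 4] by (simp add: s F0 F1' P0 P1 a2 a3 pc numeral_2_eq_2[symmetric]) (simp add: field_simps power2_eq_square power3_eq_cube, algebra)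
  show "taylor_coeff f 2 = fps_nth W 1 / 2"
    "taylor_coeff f 3 = fps_nth W 2 / 4 + (fps_nth W 1)^2 / 12"
    "taylor_coeff f 4 = fps_nth W 3 / 6 + 5/72 * fps_nth W 1 * fps_nth W 2 + (fps_nth W 1)^3 / 72"
    using a2 a3 a4 taylor_coeff_eq[OF fF] by simp_all
qed

definition schw :: "(complex \<Rightarrow> complex) \<Rightarrow> bool" where
  "schw w \<longleftrightarrow> w holomorphic_on unit_disc \<and> w 0 = 0 \<and> (\<forall>z\<in>unit_disc. norm (w z) < 1)"

lemma schw_c1:
  assumes "schw w"
  defines "W \<equiv> fps_expansion w 0"
  shows "norm (fps_nth W 1) \<le> 1"
    "norm (fps_nth W 1) = 1 \<Longrightarrow> fps_nth W 2 = 0 \<and> fps_nth W 3 = 0"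
    "\<And>z. z \<in> unit_disc \<Longrightarrow> norm (w z) \<le> norm z"
proof -
  have wh: "w holomorphic_on ball 0 1" and w0: "w 0 = 0" and wl: "\<And>z. norm z < 1 \<Longrightarrow> norm (w z) < 1"
    using assms(1) by (auto simp: schw_def unit_disc_def)
  have wW: "w has_fps_expansion W" unfolding W_def by (rule has_fps_expansion_fps_expansion[OF _ _ wh]) auto
  have d: "fps_nth W 1 = deriv w 0" using fps_nth_fps_expansion[OF wW, of 1] by simp
  note SL = Schwarz_Lemma[OF wh w0 wl]
  show "norm (fps_nth W 1) \<le> 1" using SL(2)[of 0] d by simp
  show "norm (w z) \<le> norm z" if "z \<in> unit_disc" for z using SL(1) that by (auto simp: unit_disc_def)
  assume "norm (fps_nth W 1) = 1"
  then obtain \<alpha> where \<alpha>: "\<forall>z. norm z < 1 \<longrightarrow> w z = \<alpha> * z"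
    using SL(3)[of 0] d by auto
  have "(\<lambda>z. \<alpha> * z) has_fps_expansion fps_const \<alpha> * fps_X"
    by (intro has_fps_expansion_mult has_fps_expansion_const has_fps_expansion_fps_X)
  moreover have "eventually (\<lambda>z. w z = \<alpha> * z) (nhds 0)"
  proof -
    have "eventually (\<lambda>z. z \<in> ball (0::complex) 1) (nhds 0)"
      by (rule eventually_nhds_in_open) auto
    thus ?thesis by eventually_elim (use \<alpha> in auto)
  qed
  ultimately have "W = fps_const \<alpha> * fps_X" using fps_exp_unique[OF wW] by blast
  thus "fps_nth W 2 = 0 \<and> fps_nth W 3 = 0" by simp
qed

lemma schw_exp: "schw w \<Longrightarrow> w has_fps_expansion fps_expansion w 0"
  unfolding schw_def using disc_facts by blast

lemma schur_step:
  assumes sw: "schw w"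
  defines "W \<equiv> fps_expansion w 0"
  assumes c1: "norm (fps_nth W 1) < 1"
  shows "\<exists>v. schw v \<and>
     fps_nth (fps_expansion v 0) 1 * (1 - cnj (fps_nth W 1) * fps_nth W 1) = fps_nth W 2 \<and>
     fps_nth (fps_expansion v 0) 2 * (1 - cnj (fps_nth W 1) * fps_nth W 1)
        = fps_nth W 3 + cnj (fps_nth W 1) * fps_nth W 2 * fps_nth (fps_expansion v 0) 1"
proof -
  define c where "c = fps_nth W 1"
  have wh: "w holomorphic_on ball 0 1" and w0: "w 0 = 0" and wl: "\<And>z. norm z < 1 \<Longrightarrow> norm (w z) < 1"
    using sw by (auto simp: schw_def unit_disc_def)
  have wW: "w has_fps_expansion W" unfolding W_def using schw_exp[OF sw] .
  have d: "deriv w 0 = c" using fps_nth_fps_expansion[OF wW, of 1] by (simp add: c_def)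
  define \<phi> where "\<phi> = (\<lambda>z. if z = 0 then deriv w 0 else (w z - w 0) / (z - 0))"
  have \<phi>h: "\<phi> holomorphic_on ball 0 1" unfolding \<phi>_def by (rule pole_lemma[OF wh]) auto
  have wz: "w z = z * \<phi> z" for z by (auto simp: \<phi>_def w0)
  have \<phi>0: "\<phi> 0 = c" by (simp add: \<phi>_def d)
  define \<Phi> where "\<Phi> = fps_expansion \<phi> 0"
  have \<phi>E: "\<phi> has_fps_expansion \<Phi>" unfolding \<Phi>_def by (rule has_fps_expansion_fps_expansion[OF _ _ \<phi>h]) auto
  have "(\<lambda>z. z * \<phi> z) has_fps_expansion fps_X * \<Phi>"
    by (intro has_fps_expansion_mult \<phi>E has_fps_expansion_fps_X)
  hence WX: "W = fps_X * \<Phi>" using fps_exp_unique[OF wW] wz by auto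
  have Phn: "fps_nth \<Phi> k = fps_nth W (Suc k)" for k using WX by simp
  have \<phi>lt: "norm (\<phi> z) < 1" if z: "norm z < 1" for z
  proof (cases "z = 0")
    case True thus ?thesis using \<phi>0 c1 c_def by simp
  next
    case False
    have le: "norm (w z) \<le> norm z" using schw_c1(3)[OF sw] z by (auto simp: unit_disc_def)
    have "norm (\<phi> z) = norm (w z) / norm z" using False by (simp add: \<phi>_def w0 norm_divide)
    also have "\<dots> \<le> 1" using le False by (simp add: divide_le_eq)
    finally have le1: "norm (\<phi> z) \<le> 1" .
    show ?thesis
    proof (rule ccontr)
      assume "\<not> norm (\<phi> z) < 1"
      hence "norm (w z) = norm z" using le1 wz[of z] by (simp add: norm_mult)
      then obtain \<alpha> where \<alpha>: "\<forall>z. norm z < 1 \<longrightarrow> w z = \<alpha> * z" "norm \<alpha> = 1"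
        using Schwarz_Lemma(3)[OF wh w0 wl, of 0] z False by auto
      have "(\<lambda>z. \<alpha> * z) has_fps_expansion fps_const \<alpha> * fps_X"
        by (intro has_fps_expansion_mult has_fps_expansion_const has_fps_expansion_fps_X)
      moreover have "eventually (\<lambda>z. w z = \<alpha> * z) (nhds 0)"
      proof -
        have "eventually (\<lambda>z. z \<in> ball (0::complex) 1) (nhds 0)"
          by (rule eventually_nhds_in_open) auto
        thus ?thesis by eventually_elim (use \<alpha> in auto)
      qed
      ultimately have "W = fps_const \<alpha> * fps_X" using fps_exp_unique[OF wW] by blast
      hence "c = \<alpha>" by (simp add: c_def)
      thus False using \<alpha>(2) c1 c_def by simp
    qed
  qed
  have cl: "norm c < 1" using c1 c_def by simp
  define v where "v = (\<lambda>z. Moebius_function 0 c (\<phi> z))"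
  have vh: "v holomorphic_on ball 0 1"
  proof -
    have "(Moebius_function 0 c \<circ> \<phi>) holomorphic_on ball 0 1"
      by (rule holomorphic_on_compose_gen[OF \<phi>h Moebius_function_holomorphic[OF cl]]) (use \<phi>lt in auto)
    thus ?thesis by (simp add: v_def o_def)
  qed
  have v0: "v 0 = 0" by (simp add: v_def \<phi>0 Moebius_function_eq_zero)
  have vl: "norm (v z) < 1" if "norm z < 1" for z
    unfolding v_def by (rule Moebius_function_norm_lt_1[OF cl \<phi>lt[OF that]])
  have sv: "schw v" using vh v0 vl by (auto simp: schw_def unit_disc_def)
  define V where "V = fps_expansion v 0"
  have vE: "v has_fps_expansion V" unfolding V_def using schw_exp[OF sv] .
  have V0: "fps_nth V 0 = 0" using fps_exp_at0[OF vE] v0 by simp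
  have rel: "v z * (1 - cnj c * \<phi> z) = \<phi> z - c" if "norm z < 1" for z
  proof -
    have "norm (cnj c * \<phi> z) < 1"
      using cl \<phi>lt[OF that] by (simp add: norm_mult) (metis mult_le_one norm_ge_zero less_le_not_le mult_strict_mono' le_less_trans mult_less_cancel_right1 norm_ge_zero order.strict_trans2 )
    hence "1 - cnj c * \<phi> z \<noteq> 0" by auto
    thus ?thesis by (simp add: v_def Moebius_function_simple)
  qed
  have e1: "(\<lambda>z. v z * (1 - cnj c * \<phi> z)) has_fps_expansion V * (1 - fps_const (cnj c) * \<Phi>)"
    by (intro has_fps_expansion_mult has_fps_expansion_diff has_fps_expansion_const vE \<phi>E has_fps_expansion_1)
  have e2: "(\<lambda>z. \<phi> z - c) has_fps_expansion \<Phi> - fps_const c"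
    by (intro has_fps_expansion_diff has_fps_expansion_const \<phi>E)
  have ev: "eventually (\<lambda>z. v z * (1 - cnj c * \<phi> z) = \<phi> z - c) (nhds 0)"
  proof -
    have "eventually (\<lambda>z. z \<in> ball (0::complex) 1) (nhds 0)"
      by (rule eventually_nhds_in_open) auto
    thus ?thesis by eventually_elim (use rel in auto)
  qed
  have R: "V * (1 - fps_const (cnj c) * \<Phi>) = \<Phi> - fps_const c"
    by (rule fps_exp_unique[OF e1 e2 ev])
  have R1: "fps_nth (V * (1 - fps_const (cnj c) * \<Phi>)) n = fps_nth (\<Phi> - fps_const c) n" for n
    using R by simp
  have s: "{0..1::nat} = {0,1}" "{0..2::nat} = {0,1,2}" by auto
  have P0: "fps_nth \<Phi> 0 = c" using Phn[of 0] c_def by simp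
  have cs: "fps_nth W (Suc 0) = c" by (simp add: c_def)
  have eq1: "fps_nth V 1 * (1 - cnj c * c) = fps_nth W 2"
    using R1[of 1] by (simp add: fps_mult_nth s V0 P0 Phn numeral_2_eq_2 cs)
  have eq2: "fps_nth V 2 * (1 - cnj c * c) = fps_nth W 3 + cnj c * fps_nth W 2 * fps_nth V 1"
    using R1[of 2] by (simp add: fps_mult_nth s V0 P0 Phn numeral_2_eq_2 numeral_3_eq_3 cs algebra_simps)
  show ?thesis using sv eq1 eq2 unfolding V_def c_def by blast
qed

lemma cnj_mult_self: "cnj c * c = complex_of_real ((norm c)^2)"
  by (metis complex_norm_square mult.commute of_real_power)

lemma schw_c2:
  assumes sw: "schw w"
  defines "W \<equiv> fps_expansion w 0"
  shows "norm (fps_nth W 2) \<le> 1 - (norm (fps_nth W 1))^2"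
proof -
  have c1: "norm (fps_nth W 1) \<le> 1" using schw_c1(1)[OF sw] W_def by simp
  show ?thesis
  proof (cases "norm (fps_nth W 1) = 1")
    case True thus ?thesis using schw_c1(2)[OF sw] W_def by simp
  next
    case False
    hence lt: "norm (fps_nth W 1) < 1" using c1 by simp
    obtain v where v: "schw v"
      "fps_nth (fps_expansion v 0) 1 * (1 - cnj (fps_nth W 1) * fps_nth W 1) = fps_nth W 2"
      using schur_step[OF sw lt[unfolded W_def]] W_def by blast
    have t: "norm (fps_nth (fps_expansion v 0) 1) \<le> 1" using schw_c1(1)[OF v(1)] .
    have D: "0 \<le> 1 - (norm (fps_nth W 1))^2" using c1 by (simp add: power_le_one)
    have "norm (fps_nth W 2) = norm (fps_nth (fps_expansion v 0) 1) * (1 - (norm (fps_nth W 1))^2)"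
    proof -
      have cD: "1 - cnj (fps_nth W 1) * fps_nth W 1 = complex_of_real (1 - (norm (fps_nth W 1))^2)"
        by (simp add: cnj_mult_self)
      have "fps_nth W 2 = fps_nth (fps_expansion v 0) 1 * complex_of_real (1 - (norm (fps_nth W 1))^2)"
        using v(2) unfolding cD by (rule sym)
      hence "norm (fps_nth W 2) = norm (fps_nth (fps_expansion v 0) 1) * \<bar>1 - (norm (fps_nth W 1))^2\<bar>"
        by (simp only: norm_mult norm_of_real)
      thus ?thesis using D by simp
    qed
    also have "\<dots> \<le> 1 * (1 - (norm (fps_nth W 1))^2)" by (rule mult_right_mono[OF t D])
    finally show ?thesis by simp
  qed
qed

lemma carlson:
  assumes sw: "schw w"
  defines "W \<equiv> fps_expansion w 0"
  shows "norm (fps_nth W 3) \<le> 1 - (norm (fps_nth W 1))^2 - (norm (fps_nth W 2))^2 / (1 + norm (fps_nth W 1))"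
proof -
  have c1: "norm (fps_nth W 1) \<le> 1" using schw_c1(1)[OF sw] W_def by simp
  show ?thesis
  proof (cases "norm (fps_nth W 1) = 1")
    case True thus ?thesis using schw_c1(2)[OF sw] W_def by simp
  next
    case False
    hence lt: "norm (fps_nth W 1) < 1" using c1 by simp
    obtain v where v: "schw v"
      "fps_nth (fps_expansion v 0) 1 * (1 - cnj (fps_nth W 1) * fps_nth W 1) = fps_nth W 2"
      "fps_nth (fps_expansion v 0) 2 * (1 - cnj (fps_nth W 1) * fps_nth W 1)
        = fps_nth W 3 + cnj (fps_nth W 1) * fps_nth W 2 * fps_nth (fps_expansion v 0) 1"
      using schur_step[OF sw lt[unfolded W_def]] W_def by blast
    define x where "x = norm (fps_nth W 1)"
    define y where "y = norm (fps_nth W 2)"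
    define t where "t = norm (fps_nth (fps_expansion v 0) 1)"
    define D where "D = 1 - x^2"
    have x0: "0 \<le> x" "x < 1" using lt by (auto simp: x_def)
    have Dp: "0 < D" using x0 by (simp add: D_def power_less_one_iff abs_square_less_1)
    have t2: "norm (fps_nth (fps_expansion v 0) 2) \<le> 1 - t^2" using schw_c2[OF v(1)] t_def by simp
    have cD: "1 - cnj (fps_nth W 1) * fps_nth W 1 = complex_of_real D"
      by (simp add: cnj_mult_self D_def x_def)
    have yD: "y = t * D"
    proof -
      have "fps_nth W 2 = fps_nth (fps_expansion v 0) 1 * complex_of_real D"
        using v(2) unfolding cD by (rule sym)
      hence "norm (fps_nth W 2) = norm (fps_nth (fps_expansion v 0) 1) * \<bar>D\<bar>"
        by (simp only: norm_mult norm_of_real)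
      thus ?thesis using Dp by (simp add: y_def t_def)
    qed
    have c3: "fps_nth W 3 = fps_nth (fps_expansion v 0) 2 * complex_of_real D
              - cnj (fps_nth W 1) * fps_nth W 2 * fps_nth (fps_expansion v 0) 1"
      unfolding eq_diff_eq using v(3)[unfolded cD] by (rule sym)
    have "norm (fps_nth W 3) \<le> norm (fps_nth (fps_expansion v 0) 2 * complex_of_real D)
              + norm (cnj (fps_nth W 1) * fps_nth W 2 * fps_nth (fps_expansion v 0) 1)"
      unfolding c3 by (rule norm_triangle_ineq4)
    also have "\<dots> = norm (fps_nth (fps_expansion v 0) 2) * D + x * y * t"
      using Dp by (simp add: norm_mult x_def y_def t_def)
    also have "\<dots> \<le> (1 - t^2) * D + x * y * t"
      using t2 Dp by (intro add_right_mono mult_right_mono) auto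
    also have "\<dots> = 1 - x^2 - y^2 / (1 + x)"
    proof -
      have Dx: "D = (1 - x) * (1 + x)" by (simp add: D_def algebra_simps power2_eq_square)
      have px: "1 + x > 0" using x0 by simp
      have q: "y^2 / (1 + x) = t^2 * D * (1 - x)"
        unfolding yD using px by (simp add: Dx power2_eq_square field_simps)
      show ?thesis unfolding q by (simp add: D_def yD algebra_simps power2_eq_square)
    qed
    finally show ?thesis by (simp add: x_def y_def)
  qed
qed

lemma ineq2:
  fixes x y :: real assumes "0 \<le> x" "x \<le> 1" "0 \<le> y"
  shows "x * y / 3 + x^3 / 6 \<le> x^2 + y^2 / (1 + x)"
proof -
  have p: "1 + x > 0" using assms by simp
  have "0 \<le> (y - x * (1 + x) / 6)^2" by simp
  hence "x * y / 3 - x^2 * (1 + x) / 36 \<le> y^2 / (1 + x)"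
    using p by (simp add: field_simps power2_eq_square)
  moreover have "x^3 / 6 + x^2 * (1 + x) / 36 \<le> x^2"
  proof -
    have "x^3 \<le> x^2" using assms by (simp add: power_decreasing power3_eq_cube power2_eq_square mult_left_le)
    moreover have "x^2 * (1 + x) = x^2 + x^3" by (simp add: algebra_simps power2_eq_square power3_eq_cube)
    moreover have "0 \<le> x^3" using assms by simp
    ultimately show ?thesis by linarith
  qed
  ultimately show ?thesis by linarith
qed

lemma ineq3:
  fixes x y z :: real assumes "0 \<le> x" "x \<le> 1" "0 \<le> y" "y \<le> 1 - x^2" "z \<le> 1 - x^2 - y^2/(1+x)"
  shows "x * z / 12 + y^2 / 16 + x^2 * y / 144 \<le> 1/16"
proof -
  have p: "1 + x > 0" using assms by simp
  define A where "A = 1/16 - x / (12 * (1 + x))"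
  have A0: "0 \<le> A" using assms p unfolding A_def by (simp add: field_simps)
  have "x * z / 12 \<le> x * (1 - x^2 - y^2/(1+x)) / 12"
    using assms by (simp add: mult_left_mono)
  hence h1: "x * z / 12 + y^2 / 16 + x^2 * y / 144 \<le> x * (1 - x^2) / 12 + A * y^2 + x^2 * y / 144"
    using p by (simp add: A_def field_simps)
  have y2: "y^2 \<le> (1 - x^2)^2" using assms by (simp add: power_mono)
  have h2: "A * y^2 + x^2 * y / 144 \<le> A * (1 - x^2)^2 + x^2 * (1 - x^2) / 144"
    using A0 y2 assms by (intro add_mono mult_left_mono divide_right_mono) auto
  have h3: "x * (1 - x^2) / 12 + A * (1 - x^2)^2 + x^2 * (1 - x^2) / 144 = (1 - x^2) * (1/16 + x^2/36)"
    using p unfolding A_def by (simp add: field_simps power2_eq_square)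
  have h4: "(1 - x^2) * (1/16 + x^2/36) \<le> 1/16"
  proof -
    have "0 \<le> x^2 * (1/16 - 1/36) + x^2 * x^2 / 36" by simp
    moreover have "(1 - x^2) * (1/16 + x^2/36) = 1/16 - (x^2 * (1/16 - 1/36) + x^2 * x^2 / 36)"
      by (simp add: field_simps power2_eq_square)
    ultimately show ?thesis by linarith
  qed
  show ?thesis using h1 h2 h3 h4 by linarith
qed

lemma upper:
  assumes "SG_star f"
  shows "(\<forall>\<mu>::complex. norm (taylor_coeff f 3 - \<mu> * (taylor_coeff f 2)^2)
                 \<le> (1/4) * max 1 (norm (\<mu> - 1/3))) \<and>
            norm (taylor_coeff f 2 * taylor_coeff f 3 - taylor_coeff f 4) \<le> 1/6 \<and>
            norm (taylor_coeff f 2 * taylor_coeff f 4 - (taylor_coeff f 3)^2) \<le> 1/16"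
proof -
  from assms obtain w where fS: "classS f" and wh: "w holomorphic_on unit_disc" and w0: "w 0 = 0"
    and wl: "\<forall>z\<in>unit_disc. norm (w z) < 1" and sq: "\<forall>z\<in>unit_disc. starlike_quot f z = Psi (w z)"
    unfolding SG_star_def subordinate_def by blast
  have sw: "schw w" using wh w0 wl by (simp add: schw_def)
  define W where "W = fps_expansion w 0"
  define c1 where "c1 = fps_nth W 1"
  define c2 where "c2 = fps_nth W 2"
  define c3 where "c3 = fps_nth W 3"
  note cf = coeffs[OF fS wh w0 sq, folded W_def, folded c1_def c2_def c3_def]
  define x where "x = norm c1"
  define y where "y = norm c2"
  have x1: "x \<le> 1" using schw_c1(1)[OF sw] by (simp add: x_def c1_def W_def)
  have x0: "0 \<le> x" by (simp add: x_def)
  have y0: "0 \<le> y" by (simp add: y_def)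
  have y1: "y \<le> 1 - x^2" using schw_c2[OF sw] by (simp add: x_def y_def c1_def c2_def W_def)
  have z1: "norm c3 \<le> 1 - x^2 - y^2 / (1 + x)" using carlson[OF sw] by (simp add: x_def y_def c1_def c2_def c3_def W_def)
  have x2: "x^2 \<le> 1" using x0 x1 by (simp add: power_le_one)
  have P1: "norm (taylor_coeff f 3 - \<mu> * (taylor_coeff f 2)^2) \<le> (1/4) * max 1 (norm (\<mu> - 1/3))" for \<mu>
  proof -
    define m where "m = norm (\<mu> - 1/3)"
    have E: "taylor_coeff f 3 - \<mu> * (taylor_coeff f 2)^2 = (1/4) * (c2 - (\<mu> - 1/3) * c1^2)"
      unfolding cf by (simp add: field_simps power2_eq_square)
    have "norm (taylor_coeff f 3 - \<mu> * (taylor_coeff f 2)^2) = (1/4) * norm (c2 - (\<mu> - 1/3) * c1^2)"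
      unfolding E norm_mult by simp
    also have "norm (c2 - (\<mu> - 1/3) * c1^2) \<le> y + m * x^2"
      using norm_triangle_ineq4[of c2 "(\<mu> - 1/3) * c1^2"] by (simp add: norm_mult norm_power m_def x_def y_def)
    also have "y + m * x^2 \<le> max 1 m"
    proof (cases "m \<le> 1")
      case True
      have "m * x^2 \<le> 1 * x^2" using True by (intro mult_right_mono) auto
      thus ?thesis using y1 by simp
    next
      case False
      have "(m - 1) * x^2 \<le> (m - 1) * 1" using False x2 by (intro mult_left_mono) auto
      thus ?thesis using y1 False by (simp add: algebra_simps)
    qed
    finally show ?thesis by (simp add: m_def)
  qed
  have P2: "norm (taylor_coeff f 2 * taylor_coeff f 3 - taylor_coeff f 4) \<le> 1/6"
  proof -
    have E: "taylor_coeff f 2 * taylor_coeff f 3 - taylor_coeff f 4 = -(1/6) * (c3 - c1 * c2 / 3 - c1^3 / 6)"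
      unfolding cf by (simp add: field_simps power2_eq_square power3_eq_cube)
    have "norm (taylor_coeff f 2 * taylor_coeff f 3 - taylor_coeff f 4) = (1/6) * norm (c3 - c1 * c2 / 3 - c1^3 / 6)"
      unfolding E norm_mult by simp
    also have "norm (c3 - c1 * c2 / 3 - c1^3 / 6) \<le> norm c3 + x * y / 3 + x^3 / 6"
    proof -
      have "norm (c3 - c1 * c2 / 3 - c1^3 / 6) \<le> norm (c3 - c1 * c2 / 3) + norm (c1^3 / 6)"
        by (rule norm_triangle_ineq4)
      also have "norm (c3 - c1 * c2 / 3) \<le> norm c3 + norm (c1 * c2 / 3)" by (rule norm_triangle_ineq4)
      finally show ?thesis by (simp add: norm_mult norm_divide norm_power x_def y_def)
    qed
    also have "\<dots> \<le> 1" using z1 ineq2[OF x0 x1 y0] by linarith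
    finally show ?thesis by simp
  qed
  have P3: "norm (taylor_coeff f 2 * taylor_coeff f 4 - (taylor_coeff f 3)^2) \<le> 1/16"
  proof -
    have "taylor_coeff f 2 * taylor_coeff f 4 - (taylor_coeff f 3)^2 = c1 * c3 / 12 - c2^2 / 16 - c1^2 * c2 / 144"
      unfolding cf by (simp add: field_simps power2_eq_square power3_eq_cube)
    hence "norm (taylor_coeff f 2 * taylor_coeff f 4 - (taylor_coeff f 3)^2) = norm (c1 * c3 / 12 - c2^2 / 16 - c1^2 * c2 / 144)"
      by simp
    also have "\<dots> \<le> x * norm c3 / 12 + y^2 / 16 + x^2 * y / 144"
    proof -
      have "norm (c1 * c3 / 12 - c2^2 / 16 - c1^2 * c2 / 144) \<le> norm (c1 * c3 / 12 - c2^2 / 16) + norm (c1^2 * c2 / 144)"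
        by (rule norm_triangle_ineq4)
      also have "norm (c1 * c3 / 12 - c2^2 / 16) \<le> norm (c1 * c3 / 12) + norm (c2^2 / 16)" by (rule norm_triangle_ineq4)
      finally show ?thesis by (simp add: norm_mult norm_divide norm_power x_def y_def)
    qed
    also have "\<dots> \<le> 1/16" by (rule ineq3[OF x0 x1 y0 y1 z1])
    finally show ?thesis .
  qed
  show ?thesis using P1 P2 P3 by blast
qed

lemma disc_Re_pos: "norm (u::complex) < 1 \<Longrightarrow> 0 < Re (1 + u)"
  using abs_Re_le_cmod[of u] by auto

lemma disc_notin_nonpos: "norm (u::complex) < 1 \<Longrightarrow> 1 + u \<notin> \<real>\<^sub>\<le>\<^sub>0"
  using disc_Re_pos[of u] by (auto simp: complex_nonpos_Reals_iff)

lemma holo_from_fps: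
  fixes f :: "complex \<Rightarrow> complex"
  assumes "open S" "f has_fps_expansion F" "f holomorphic_on (S - {0})"
  shows "f holomorphic_on S"
proof -
  obtain s where s: "open s" "0 \<in> s" "f holomorphic_on s"
    using has_fps_expansion_imp_holomorphic[OF assms(2)] by metis
  have o2: "open (S - {0})" using assms(1) by auto
  show ?thesis unfolding holomorphic_on_open[OF assms(1)]
  proof
    fix x assume x: "x \<in> S"
    show "\<exists>f'. (f has_field_derivative f') (at x)"
    proof (cases "x = 0")
      case True thus ?thesis using s holomorphic_on_open[OF s(1)] by blast
    next
      case False thus ?thesis using x assms(3) holomorphic_on_open[OF o2] by blast
    qed
  qed
qed

lemma Psi_holo: "Psi holomorphic_on unit_disc"
proof (rule holo_from_fps[OF _ Psi_exp])
  show "open unit_disc" by (simp add: unit_disc_def)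
  have "(\<lambda>z. z / Ln (1 + z)) holomorphic_on (unit_disc - {0})"
  proof (intro holomorphic_intros)
    fix z assume z: "z \<in> unit_disc - {0}"
    hence nz: "norm z < 1" "z \<noteq> 0" by (auto simp: unit_disc_def)
    show "1 + z \<notin> \<real>\<^sub>\<le>\<^sub>0" using disc_notin_nonpos[OF nz(1)] .
    show "Ln (1 + z) \<noteq> 0"
    proof
      assume "Ln (1 + z) = 0"
      hence "exp (Ln (1 + z)) = 1" by simp
      moreover have "1 + z \<noteq> 0" using disc_Re_pos[OF nz(1)] by (metis less_irrefl zero_complex.sel(1))
      ultimately show False using nz(2) by simp
    qed
  qed
  thus "Psi holomorphic_on (unit_disc - {0})"
    by (rule holomorphic_transform) (auto simp: Psi_def)
qed

lemma Re_Ln_div_pos: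
  assumes z: "norm z < 1" "z \<noteq> 0"
  shows "0 < Re (Ln (1 + z) / z)"
proof -
  have seg: "norm u < 1" if "u \<in> closed_segment 0 z" for u
  proof -
    have "closed_segment 0 z \<subseteq> ball 0 1"
      by (rule convex_contains_segment[THEN iffD1, rule_format, OF convex_ball]) (use z in auto)
    thus ?thesis using that by auto
  qed
  have der: "((\<lambda>u. Ln (1 + u) / z) has_field_derivative (inverse (1 + u) / z)) (at u)"
    if "u \<in> closed_segment 0 z" for u
  proof -
    have d1: "(Ln has_field_derivative inverse (1+u)) (at (1+u))"
      by (rule has_field_derivative_Ln[OF disc_notin_nonpos[OF seg[OF that]]])
    have d2: "((\<lambda>u. 1 + u) has_field_derivative 1) (at u)" by (auto intro!: derivative_eq_intros)
    have "((\<lambda>u. Ln (1 + u)) has_field_derivative inverse (1 + u) * 1) (at u)"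
      by (rule DERIV_chain2[where g="\<lambda>u. 1 + u", OF d1 d2])
    thus ?thesis using z(2) disc_notin_nonpos[OF seg[OF that]] by (auto intro!: derivative_eq_intros)
  qed
  obtain u where u: "u \<in> closed_segment 0 z"
    "Re (Ln (1 + z) / z) - Re (Ln (1 + 0) / z) = Re (inverse (1 + u) / z * (z - 0))"
    using complex_mvt_line[OF der] by blast
  have "Re (Ln (1 + z) / z) = Re (inverse (1 + u))" using u(2) z by simp
  also have "\<dots> > 0"
  proof -
    have p: "0 < Re (1 + u)" using disc_Re_pos[OF seg[OF u(1)]] .
    hence "1 + u \<noteq> 0" by (metis less_irrefl zero_complex.sel(1))
    hence "Re (inverse (1 + u)) = Re (1 + u) / (norm (1 + u))^2"
      by (simp add: inverse_eq_divide Re_divide complex_norm_square[symmetric] power2_eq_square cmod_def)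
    thus ?thesis using p \<open>1 + u \<noteq> 0\<close> by simp
  qed
  finally show ?thesis .
qed

lemma Re_Psi_pos:
  assumes "norm z < 1" shows "0 < Re (Psi z)"
proof (cases "z = 0")
  case True thus ?thesis by (simp add: Psi_def)
next
  case False
  define q where "q = Ln (1 + z) / z"
  have q: "0 < Re q" unfolding q_def by (rule Re_Ln_div_pos[OF assms False])
  hence qn: "q \<noteq> 0" by auto
  have "Psi z = inverse q" using False by (simp add: Psi_def q_def)
  also have "Re (inverse q) = Re q / (norm q)^2"
    by (simp add: inverse_eq_divide Re_divide cmod_def)
  also have "\<dots> > 0" using q qn by simp
  finally show ?thesis .
qed

lemma NW_inj:
  fixes g g' :: "complex \<Rightarrow> complex"
  assumes "convex S" "\<And>z. z \<in> S \<Longrightarrow> (g has_field_derivative g' z) (at z)"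
    "\<And>z. z \<in> S \<Longrightarrow> 0 < Re (g' z)"
  shows "inj_on g S"
proof (rule inj_onI, rule ccontr)
  fix a b assume ab: "a \<in> S" "b \<in> S" "g a = g b" "a \<noteq> b"
  define d where "d = b - a"
  have d0: "d \<noteq> 0" using ab by (simp add: d_def)
  have segS: "closed_segment a b \<subseteq> S" using assms(1) ab convex_contains_segment by blast
  have der: "((\<lambda>z. g z / d) has_field_derivative (g' u / d)) (at u)" if "u \<in> closed_segment a b" for u
    using assms(2)[of u] segS that d0 by (auto intro!: derivative_eq_intros)
  obtain u where u: "u \<in> closed_segment a b" "Re (g b / d) - Re (g a / d) = Re (g' u / d * (b - a))"
    using complex_mvt_line[OF der] by blast
  have "Re (g' u) = 0" using u(2) ab(3) d0 by (simp add: d_def)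
  thus False using assms(3)[of u] segS u(1) by auto
qed

lemma construct:
  assumes k: "k \<ge> (1::nat)"
  shows "\<exists>f. SG_star f \<and> (\<forall>z\<in>unit_disc. starlike_quot f z = Psi (z ^ k))"
proof -
  have disc: "unit_disc = ball 0 1" by (simp add: unit_disc_def)
  have zk: "norm (z ^ k) < 1" if "norm z < 1" for z :: complex
    using that k by (simp add: norm_power power_less_one_iff)
  define p where "p = (\<lambda>z::complex. Psi (z ^ k))"
  have ph: "p holomorphic_on ball 0 1"
  proof -
    have "(Psi \<circ> (\<lambda>z. z ^ k)) holomorphic_on ball 0 1"
      by (rule holomorphic_on_compose_gen[OF _ Psi_holo[unfolded disc]]) (auto intro!: holomorphic_intros simp: zk)
    thus ?thesis by (simp add: p_def o_def)
  qed
  have p0: "p 0 = 1" using k by (simp add: p_def Psi_def)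
  have pRe: "0 < Re (p z)" if "norm z < 1" for z using Re_Psi_pos[OF zk[OF that]] by (simp add: p_def)
  define q where "q = (\<lambda>z. if z = 0 then deriv p 0 else (p z - p 0) / (z - 0))"
  have qh: "q holomorphic_on ball 0 1" unfolding q_def by (rule pole_lemma[OF ph]) auto
  have zq: "z * q z = p z - 1" for z by (auto simp: q_def p0)
  obtain H0 where H0: "\<And>x. x \<in> ball 0 1 \<Longrightarrow> (H0 has_field_derivative q x) (at x within ball 0 1)"
    using holomorphic_convex_primitive'[OF convex_ball open_ball qh] by blast
  define H where "H = (\<lambda>z. H0 z - H0 0)"
  have Hd: "(H has_field_derivative q x) (at x)" if "norm x < 1" for x
  proof -
    have "(H0 has_field_derivative q x) (at x)"
      using H0[of x] that by (simp add: at_within_open[OF _ open_ball])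
    thus ?thesis unfolding H_def by (auto intro!: derivative_eq_intros)
  qed
  have H00: "H 0 = 0" by (simp add: H_def)
  define f where "f = (\<lambda>z. z * exp (H z))"
  have fd: "(f has_field_derivative p z * exp (H z)) (at z)" if "norm z < 1" for z
  proof -
    have "(f has_field_derivative (1 * exp (H z) + z * (exp (H z) * q z))) (at z)"
      unfolding f_def by (auto intro!: derivative_eq_intros Hd[OF that])
    moreover have "1 * exp (H z) + z * (exp (H z) * q z) = (1 + z * q z) * exp (H z)"
      by (simp add: algebra_simps)
    moreover have "(1 + z * q z) * exp (H z) = p z * exp (H z)" using zq[of z] by simp
    ultimately show ?thesis by simp
  qed
  have fh: "f holomorphic_on unit_disc"
    unfolding disc holomorphic_on_open[OF open_ball] using fd by (metis mem_ball_0)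
  have f0: "f 0 = 0" by (simp add: f_def)
  have df: "deriv f z = p z * exp (H z)" if "norm z < 1" for z
    using DERIV_imp_deriv[OF fd[OF that]] .
  have df0: "deriv f 0 = 1" using df[of 0] by (simp add: p0 H00)
  have fz0: "f z = 0 \<longleftrightarrow> z = 0" for z by (simp add: f_def)
  define L where "L = {\<zeta>::complex. Re \<zeta> < 0}"
  define g where "g = (\<lambda>\<zeta>. \<zeta> + H (exp \<zeta>))"
  have expL: "norm (exp \<zeta>) < 1" if "\<zeta> \<in> L" for \<zeta> using that by (simp add: L_def)
  have gd: "(g has_field_derivative p (exp \<zeta>)) (at \<zeta>)" if "\<zeta> \<in> L" for \<zeta>
  proof -
    have "(g has_field_derivative 1 + q (exp \<zeta>) * exp \<zeta>) (at \<zeta>)"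
    proof -
      have "((\<lambda>x. H (exp x)) has_field_derivative q (exp \<zeta>) * exp \<zeta>) (at \<zeta>)"
        by (rule DERIV_chain2[where g=exp, OF Hd[OF expL[OF that]]]) (rule DERIV_exp)
      thus ?thesis unfolding g_def by (auto intro!: derivative_eq_intros)
    qed
    moreover have "1 + q (exp \<zeta>) * exp \<zeta> = p (exp \<zeta>)" using zq[of "exp \<zeta>"] by (simp add: mult.commute)
    ultimately show ?thesis by simp
  qed
  have ginj: "inj_on g L"
    by (rule NW_inj[OF _ gd]) (auto simp: L_def convex_halfspace_Re_lt intro: pRe expL)
  have fexp: "f (exp \<zeta>) = exp (g \<zeta>)" for \<zeta> by (simp add: f_def g_def exp_add)
  have finj: "inj_on f unit_disc"
  proof (rule inj_onI)
    fix z1 z2 assume z: "z1 \<in> unit_disc" "z2 \<in> unit_disc" "f z1 = f z2"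
    show "z1 = z2"
    proof (cases "z1 = 0 \<or> z2 = 0")
      case True thus ?thesis using z(3) fz0 f0 by metis
    next
      case False
      define \<zeta>1 where "\<zeta>1 = Ln z1"
      define \<zeta>2 where "\<zeta>2 = Ln z2"
      have e1: "exp \<zeta>1 = z1" "exp \<zeta>2 = z2" using False by (auto simp: \<zeta>1_def \<zeta>2_def)
      have L1: "\<zeta>1 \<in> L" "\<zeta>2 \<in> L" using False z(1,2) by (auto simp: L_def \<zeta>1_def \<zeta>2_def disc ln_less_zero_iff)
      have "exp (g \<zeta>1) = exp (g \<zeta>2)" using z(3) fexp e1 by metis
      then obtain n :: int where n: "g \<zeta>1 = g \<zeta>2 + (of_int (2 * n) * pi) * \<i>" by (auto simp: exp_eq)
      define \<zeta>3 where "\<zeta>3 = \<zeta>2 + (of_int (2 * n) * pi) * \<i>"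
      have e3: "exp \<zeta>3 = exp \<zeta>2"
        unfolding \<zeta>3_def by (metis exp_eq)
      have L3: "\<zeta>3 \<in> L" using L1 by (simp add: \<zeta>3_def L_def)
      have "g \<zeta>3 = g \<zeta>1" using n e3 by (simp add: g_def \<zeta>3_def algebra_simps)
      hence "\<zeta>3 = \<zeta>1" using ginj L1 L3 by (auto dest: inj_onD)
      thus ?thesis using e1 e3 by simp
    qed
  qed
  have fS: "classS f" using fh finj f0 df0 by (simp add: classS_def)
  have sq: "\<forall>z\<in>unit_disc. starlike_quot f z = Psi (z ^ k)"
  proof
    fix z assume z: "z \<in> unit_disc"
    show "starlike_quot f z = Psi (z ^ k)"
    proof (cases "z = 0")
      case True thus ?thesis using k by (simp add: starlike_quot_def Psi_def)
    next
      case False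
      have "starlike_quot f z = z * (p z * exp (H z)) / (z * exp (H z))"
        using False z df by (simp add: starlike_quot_def f_def disc)
      also have "\<dots> = p z" using False by simp
      finally show ?thesis by (simp add: p_def)
    qed
  qed
  have sub: "subordinate (starlike_quot f) Psi"
    unfolding subordinate_def
    by (rule exI[of _ "\<lambda>z. z ^ k"]) (use sq k zk in \<open>auto simp: disc intro!: holomorphic_intros\<close>)
  show ?thesis using fS sub sq by (auto simp: SG_star_def)
qed

lemma sharp:
  assumes k: "k \<ge> (1::nat)"
  defines "c \<equiv> \<lambda>j. if j = k then (1::complex) else 0"
  shows "\<exists>f. SG_star f \<and> taylor_coeff f 2 = c 1 / 2 \<and>
    taylor_coeff f 3 = c 2 / 4 + (c 1)^2 / 12 \<and>
    taylor_coeff f 4 = c 3 / 6 + 5/72 * c 1 * c 2 + (c 1)^3 / 72"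
proof -
  obtain f where f: "SG_star f" "\<forall>z\<in>unit_disc. starlike_quot f z = Psi (z ^ k)"
    using construct[OF k] by blast
  have fS: "classS f" using f(1) by (simp add: SG_star_def)
  have wh: "(\<lambda>z::complex. z ^ k) holomorphic_on unit_disc" by (intro holomorphic_intros)
  have w0: "(\<lambda>z::complex. z ^ k) 0 = 0" using k by simp
  have W: "fps_expansion (\<lambda>z::complex. z ^ k) 0 = fps_X ^ k"
    by (rule fps_exp_unique[OF has_fps_expansion_fps_expansion[OF _ _ wh] has_fps_expansion_fps_X_power])
       (use disc_facts in auto)
  have cW: "fps_nth (fps_expansion (\<lambda>z::complex. z ^ k) 0) j = c j" for j
    unfolding W c_def by (simp add: fps_X_power_nth)
  note cf = coeffs[OF fS wh w0, unfolded cW]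
  show ?thesis using f(1) cf f(2) by auto
qed

theorem theorem2:
  shows "(\<forall>f. SG_star f \<longrightarrow>
            (\<forall>\<mu>::complex. norm (taylor_coeff f 3 - \<mu> * (taylor_coeff f 2)^2)
                 \<le> (1/4) * max 1 (norm (\<mu> - 1/3))) \<and>
            norm (taylor_coeff f 2 * taylor_coeff f 3 - taylor_coeff f 4) \<le> 1/6 \<and>
            norm (taylor_coeff f 2 * taylor_coeff f 4 - (taylor_coeff f 3)^2) \<le> 1/16)
       \<and> (\<forall>\<mu>::complex. \<exists>f. SG_star f \<and>
            norm (taylor_coeff f 3 - \<mu> * (taylor_coeff f 2)^2) = (1/4) * max 1 (norm (\<mu> - 1/3)))
       \<and> (\<exists>f. SG_star f \<and> norm (taylor_coeff f 2 * taylor_coeff f 3 - taylor_coeff f 4) = 1/6)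
       \<and> (\<exists>f. SG_star f \<and> norm (taylor_coeff f 2 * taylor_coeff f 4 - (taylor_coeff f 3)^2) = 1/16)"
proof (intro conjI)
  show "\<forall>f. SG_star f \<longrightarrow>
            (\<forall>\<mu>::complex. norm (taylor_coeff f 3 - \<mu> * (taylor_coeff f 2)^2)
                 \<le> (1/4) * max 1 (norm (\<mu> - 1/3))) \<and>
            norm (taylor_coeff f 2 * taylor_coeff f 3 - taylor_coeff f 4) \<le> 1/6 \<and>
            norm (taylor_coeff f 2 * taylor_coeff f 4 - (taylor_coeff f 3)^2) \<le> 1/16"
    using upper by blast
next
  show "\<forall>\<mu>::complex. \<exists>f. SG_star f \<and> norm (taylor_coeff f 3 - \<mu> * (taylor_coeff f 2)^2) = (1/4) * max 1 (norm (\<mu> - 1/3))"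
  proof
    fix \<mu> :: complex
    show "\<exists>f. SG_star f \<and> norm (taylor_coeff f 3 - \<mu> * (taylor_coeff f 2)^2) = (1/4) * max 1 (norm (\<mu> - 1/3))"
  proof (cases "1 \<le> norm (\<mu> - 1/3)")
    case True
    obtain f where f: "SG_star f" "taylor_coeff f 2 = 1/2" "taylor_coeff f 3 = 1/12"
      using sharp[of 1] by auto
    have "taylor_coeff f 3 - \<mu> * (taylor_coeff f 2)^2 = - (1/4) * (\<mu> - 1/3)"
      unfolding f by (simp add: field_simps power2_eq_square)
    hence "norm (taylor_coeff f 3 - \<mu> * (taylor_coeff f 2)^2) = (1/4) * norm (\<mu> - 1/3)"
      by (simp add: norm_mult)
    thus ?thesis using f(1) True by (intro exI[of _ f]) auto
  next
    case False
    obtain f where f: "SG_star f" "taylor_coeff f 2 = 0" "taylor_coeff f 3 = 1/4"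
      using sharp[of 2] by auto
    have "norm (taylor_coeff f 3 - \<mu> * (taylor_coeff f 2)^2) = 1/4" unfolding f(2) f(3) by simp
    thus ?thesis using f(1) False by (intro exI[of _ f]) (simp add: max_def)
  qed
  qed
next
  obtain f where f: "SG_star f" "taylor_coeff f 2 = 0" "taylor_coeff f 3 = 0" "taylor_coeff f 4 = 1/6"
    using sharp[of 3] by auto
  have "norm (taylor_coeff f 2 * taylor_coeff f 3 - taylor_coeff f 4) = 1/6" unfolding f(2-4) by simp
  thus "\<exists>f. SG_star f \<and> norm (taylor_coeff f 2 * taylor_coeff f 3 - taylor_coeff f 4) = 1/6"
    using f(1) by blast
next
  obtain f where f: "SG_star f" "taylor_coeff f 2 = 0" "taylor_coeff f 3 = 1/4" "taylor_coeff f 4 = 0"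
    using sharp[of 2] by auto
  have "norm (taylor_coeff f 2 * taylor_coeff f 4 - (taylor_coeff f 3)^2) = 1/16"
    unfolding f(2-4) by (simp add: power2_eq_square)
  thus "\<exists>f. SG_star f \<and> norm (taylor_coeff f 2 * taylor_coeff f 4 - (taylor_coeff f 3)^2) = 1/16"
    using f(1) by blast
qed

end
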